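(* Let $\Phi=(V,Q,\mathcal{C})$ be a CSP formula with atomic constraints and $h=(h_v)_{v\in V}$ a projection scheme satisfying the entropy criterion with parameters $0<\beta<\alpha<1$. Let $D$ be the maximum degree of the dependency graph of $\Phi$ and $q_v=|Q_v|$, $s_v=|\Sigma_v|$. Suppose that for every $c\in\mathcal{C}$, $\sum_{v\in\mathrm{vbl}(c)}\log q_v\ge\frac1\beta\log(40\mathrm{e}D^2)$. Then for any variable $u\in V$, any $\tau\in\bigotimes_{v\in V\setminus\{u\}}\Sigma_v$ and any $y\in\Sigma_u$, $$\nu_u^{\tau}(y)\le\frac{1}{q_u}\Big\lceil\frac{q_u}{s_u}\Big\rceil\exp\Big(\frac1{20D}\Big).$$
   Context: A CSP formula: variables $V$ with finite domains $Q_v$ ($|Q_v|\ge2$), constraints $c$ on $\mathrm{vbl}(c)\subseteq V$; atomic means violated by exactly one configuration of its variables. Dependency graph: vertices $\mathcal{C}$, adjacency iff variable sets intersect. $\mu$: uniform distribution over satisfying assignments. Projection scheme: $h_v:Q_v\to\Sigma_v$. Entropy criterion with $(\alpha,\beta)$: $\lfloor q_v/s_v\rfloor\le|h_v^{-1}(y)|\le\lceil q_v/s_v\rceil$ for all $v,y$; and for each $c$: $\sum_{v\in\mathrm{vbl}(c)}\log\lceil q_v/s_v\rceil\le\alpha\sum_{v\in\mathrm{vbl}(c)}\log q_v$, $\sum_{v\in\mathrm{vbl}(c)}\log\lfloor q_v/s_v\rfloor\ge\beta\sum_{v\in\mathrm{vbl}(c)}\log q_v$. $\nu$ is the distribution of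 $(h_v(X_v))_v$ for $X\sim\mu$, and $\nu_u^\tau$ denotes the marginal distribution at $u$ of $\nu$ conditioned on the values at $V\setminus\{u\}$ being $\tau$. $\log$ is base 2. *)

theory Defs
  imports "HOL-Probability.Probability"
begin

text \<open>A CSP formula: variables V, domains Q v, constraint indices C, each constraint c
  has a variable set vbl c and a predicate sat c on assignments of vbl c
  (functions in PiE (vbl c) Q).\<close>

definition csp_formula :: "'v set \<Rightarrow> ('v \<Rightarrow> 'a set) \<Rightarrow> 'c set \<Rightarrow> ('c \<Rightarrow> 'v set) \<Rightarrow> bool" where
  "csp_formula V Q C vbl \<longleftrightarrow> finite V \<and> finite C \<and>
     (\<forall>v\<in>V. finite (Q v) \<and> card (Q v) \<ge> 2) \<and> (\<forall>c\<in>C. vbl c \<subseteq> V)"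

definition atomic_constraint ::
  "('v \<Rightarrow> 'a set) \<Rightarrow> 'v set \<Rightarrow> (('v \<Rightarrow> 'a) \<Rightarrow> bool) \<Rightarrow> bool" where
  "atomic_constraint Q S P \<longleftrightarrow> (\<exists>!\<sigma>. \<sigma> \<in> PiE S Q \<and> \<not> P \<sigma>)"

definition sat_assignments ::
  "'v set \<Rightarrow> ('v \<Rightarrow> 'a set) \<Rightarrow> 'c set \<Rightarrow> ('c \<Rightarrow> 'v set) \<Rightarrow> ('c \<Rightarrow> ('v \<Rightarrow> 'a) \<Rightarrow> bool)
     \<Rightarrow> ('v \<Rightarrow> 'a) set" where
  "sat_assignments V Q C vbl sat = {X \<in> PiE V Q. \<forall>c\<in>C. sat c (restrict X (vbl c))}"

definition csp_mu ::
  "'v set \<Rightarrow> ('v \<Rightarrow> 'a set) \<Rightarrow> 'c set \<Rightarrow> ('c \<Rightarrow> 'v set) \<Rightarrow> ('c \<Rightarrow> ('v \<Rightarrow> 'a) \<Rightarrow> bool)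
     \<Rightarrow> ('v \<Rightarrow> 'a) pmf" where
  "csp_mu V Q C vbl sat = pmf_of_set (sat_assignments V Q C vbl sat)"

definition proj_nu :: "'v set \<Rightarrow> ('v \<Rightarrow> 'a \<Rightarrow> 'b) \<Rightarrow> ('v \<Rightarrow> 'a) pmf \<Rightarrow> ('v \<Rightarrow> 'b) pmf" where
  "proj_nu V h \<mu> = map_pmf (\<lambda>X. restrict (\<lambda>v. h v (X v)) V) \<mu>"

definition cond_event :: "'v set \<Rightarrow> 'v \<Rightarrow> ('v \<Rightarrow> 'b) \<Rightarrow> ('v \<Rightarrow> 'b) set" where
  "cond_event V u \<tau> = {\<sigma>. \<forall>v\<in>V - {u}. \<sigma> v = \<tau> v}"

definition cond_marginal :: "'v set \<Rightarrow> ('v \<Rightarrow> 'b) pmf \<Rightarrow> 'v \<Rightarrow> ('v \<Rightarrow> 'b) \<Rightarrow> 'b pmf" where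
  "cond_marginal V \<nu> u \<tau> = map_pmf (\<lambda>\<sigma>. \<sigma> u) (cond_pmf \<nu> (cond_event V u \<tau>))"

definition dep_degree :: "'c set \<Rightarrow> ('c \<Rightarrow> 'v set) \<Rightarrow> 'c \<Rightarrow> nat" where
  "dep_degree C vbl c = card {c' \<in> C. c' \<noteq> c \<and> vbl c \<inter> vbl c' \<noteq> {}}"

definition max_dep_degree :: "'c set \<Rightarrow> ('c \<Rightarrow> 'v set) \<Rightarrow> nat" where
  "max_dep_degree C vbl = (if C = {} then 0 else Max (dep_degree C vbl ` C))"

definition projection_scheme :: "'v set \<Rightarrow> ('v \<Rightarrow> 'a set) \<Rightarrow> ('v \<Rightarrow> 'b set) \<Rightarrow> ('v \<Rightarrow> 'a \<Rightarrow> 'b) \<Rightarrow> bool" where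
  "projection_scheme V Q \<Sigma> h \<longleftrightarrow> (\<forall>v\<in>V. finite (\<Sigma> v) \<and> (\<forall>x\<in>Q v. h v x \<in> \<Sigma> v))"

definition entropy_criterion ::
  "'v set \<Rightarrow> ('v \<Rightarrow> 'a set) \<Rightarrow> 'c set \<Rightarrow> ('c \<Rightarrow> 'v set) \<Rightarrow> ('v \<Rightarrow> 'b set) \<Rightarrow> ('v \<Rightarrow> 'a \<Rightarrow> 'b)
     \<Rightarrow> real \<Rightarrow> real \<Rightarrow> bool" where
  "entropy_criterion V Q C vbl \<Sigma> h \<alpha> \<beta> \<longleftrightarrow>
     (\<forall>v\<in>V. \<forall>y\<in>\<Sigma> v.
        \<lfloor>real (card (Q v)) / real (card (\<Sigma> v))\<rfloor> \<le> int (card {x \<in> Q v. h v x = y}) \<and>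
        int (card {x \<in> Q v. h v x = y}) \<le> \<lceil>real (card (Q v)) / real (card (\<Sigma> v))\<rceil>) \<and>
     (\<forall>c\<in>C.
        (\<Sum>v\<in>vbl c. log 2 (real_of_int \<lceil>real (card (Q v)) / real (card (\<Sigma> v))\<rceil>))
          \<le> \<alpha> * (\<Sum>v\<in>vbl c. log 2 (real (card (Q v)))) \<and>
        (\<Sum>v\<in>vbl c. log 2 (real_of_int \<lfloor>real (card (Q v)) / real (card (\<Sigma> v))\<rfloor>))
          \<ge> \<beta> * (\<Sum>v\<in>vbl c. log 2 (real (card (Q v)))))"

end

theory Submission
  imports Defs
begin

locale lllc =
  fixes V :: "'v set" and Dm :: "'v \<Rightarrow> 'a set" and C :: "'c set"
    and vbl :: "'c \<Rightarrow> 'v set" and \<sigma> :: "'c \<Rightarrow> 'v \<Rightarrow> 'a"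
  assumes finV: "finite V" and finD: "\<And>v. v \<in> V \<Longrightarrow> finite (Dm v)"
    and neD: "\<And>v. v \<in> V \<Longrightarrow> Dm v \<noteq> {}"
    and finC: "finite C" and vblV: "\<And>c. c \<in> C \<Longrightarrow> vbl c \<subseteq> V"
begin

definition viol where "viol c X \<longleftrightarrow> restrict X (vbl c) = \<sigma> c"
definition good where "good T X \<longleftrightarrow> (\<forall>j\<in>T. \<not> viol j X)"
definition G where "G T = card {X \<in> PiE V Dm. good T X}"
definition bad where "bad c T = card {X \<in> PiE V Dm. viol c X \<and> good T X}"

lemma finOm: "finite (PiE V Dm)"
  using finV finD by (intro finite_PiE) auto

lemma viol_cong: "(\<And>v. v \<in> vbl c \<Longrightarrow> X v = Y v) \<Longrightarrow> viol c X = viol c Y"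
  unfolding viol_def by (metis restrict_ext)

lemma indep:
  assumes c: "c \<in> C" and T: "T \<subseteq> C" and disj: "\<And>j. j \<in> T \<Longrightarrow> vbl j \<inter> vbl c = {}"
  shows "bad c T * card (PiE (vbl c) Dm) \<le> G T"
proof -
  define W where "W = V - vbl c"
  define r where "r = (\<lambda>X::'v\<Rightarrow>'a. restrict X W)"
  define mg where "mg = (\<lambda>(a::'v\<Rightarrow>'a, b::'v\<Rightarrow>'a). (\<lambda>v. if v \<in> vbl c then a v else b v))"
  let ?B = "{X \<in> PiE V Dm. viol c X \<and> good T X}"
  let ?Gs = "{X \<in> PiE V Dm. good T X}"
  have goodcong: "good T X = good T Y" if "\<And>v. v \<in> W \<Longrightarrow> X v = Y v" for X Y
    unfolding good_def
  proof (intro ball_cong refl arg_cong[where f=Not])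
    fix j assume j: "j \<in> T"
    show "viol j X = viol j Y"
      using that disj[OF j] vblV j T unfolding W_def by (intro viol_cong) blast
  qed
  have inj: "inj_on r ?B"
  proof
    fix X Y assume X: "X \<in> ?B" and Y: "Y \<in> ?B" and e: "r X = r Y"
    show "X = Y"
    proof
      fix v
      show "X v = Y v"
      proof (cases "v \<in> vbl c")
        case True
        from X Y have "restrict X (vbl c) v = restrict Y (vbl c) v" by (simp add: viol_def)
        with True show ?thesis by simp
      next
        case False
        show ?thesis
        proof (cases "v \<in> V")
          case True
          with False have "r X v = r Y v" using e by simp
          with True False show ?thesis by (simp add: r_def W_def)
        next
          case False
          with X Y show ?thesis by (auto simp: PiE_def extensional_def)
        qed
      qed
    qed
  qed
  have "card ?B = card (r ` ?B)" using inj by (simp add: card_image)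
  also have "\<dots> \<le> card (r ` ?Gs)"
    by (intro card_mono finite_imageI) (use finOm in auto)
  finally have c1: "card ?B \<le> card (r ` ?Gs)" .
  have inj2: "inj_on mg (PiE (vbl c) Dm \<times> r ` ?Gs)"
  proof
    fix p1 p2 assume p1: "p1 \<in> PiE (vbl c) Dm \<times> r ` ?Gs" and p2: "p2 \<in> PiE (vbl c) Dm \<times> r ` ?Gs"
      and e: "mg p1 = mg p2"
    obtain a1 b1 where ab1: "p1 = (a1, b1)" by force
    obtain a2 b2 where ab2: "p2 = (a2, b2)" by force
    have ea: "a1 = a2"
    proof
      fix v show "a1 v = a2 v"
        using p1 p2 fun_cong[OF e, of v] unfolding ab1 ab2 mg_def
        by (cases "v \<in> vbl c") (auto simp: PiE_def extensional_def)
    qed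
    have eb: "b1 = b2"
    proof
      fix v show "b1 v = b2 v"
        using p1 p2 fun_cong[OF e, of v] unfolding ab1 ab2 mg_def
        by (cases "v \<in> vbl c") (auto simp: r_def W_def)
    qed
    show "p1 = p2" using ea eb ab1 ab2 by simp
  qed
  have sub: "mg ` (PiE (vbl c) Dm \<times> r ` ?Gs) \<subseteq> ?Gs"
  proof
    fix Z assume "Z \<in> mg ` (PiE (vbl c) Dm \<times> r ` ?Gs)"
    then obtain a X where a: "a \<in> PiE (vbl c) Dm" and X: "X \<in> ?Gs" and Z: "Z = mg (a, r X)"
      by auto
    have "Z \<in> PiE V Dm"
      using a X vblV[OF c] unfolding Z mg_def r_def W_def
      by (auto simp: PiE_def extensional_def Pi_def)
    moreover have "good T Z"
      using X by (subst goodcong[of Z X]) (auto simp: Z mg_def r_def W_def)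
    ultimately show "Z \<in> ?Gs" by simp
  qed
  have "card (PiE (vbl c) Dm) * card (r ` ?Gs) = card (PiE (vbl c) Dm \<times> r ` ?Gs)"
    by (simp add: card_cartesian_product)
  also have "\<dots> = card (mg ` (PiE (vbl c) Dm \<times> r ` ?Gs))"
    using inj2 by (simp add: card_image)
  also have "\<dots> \<le> card ?Gs"
    using sub finOm by (intro card_mono) auto
  finally have c2: "card (PiE (vbl c) Dm) * card (r ` ?Gs) \<le> card ?Gs" .
  show ?thesis unfolding bad_def G_def
    using c1 c2 by (metis (no_types, lifting) dual_order.trans mult.commute mult_le_mono2)
qed

end

context lllc begin

lemma G_split:
  assumes "S2 \<subseteq> S" "finite S"
  shows "real (G S2) \<le> real (G S) + (\<Sum>j\<in>S - S2. real (bad j S2))"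
proof -
  have "{X \<in> PiE V Dm. good S2 X} \<subseteq> {X \<in> PiE V Dm. good S X} \<union> (\<Union>j\<in>S - S2. {X \<in> PiE V Dm. viol j X \<and> good S2 X})"
    using assms(1) by (auto simp: good_def)
  then have "G S2 \<le> card ({X \<in> PiE V Dm. good S X} \<union> (\<Union>j\<in>S - S2. {X \<in> PiE V Dm. viol j X \<and> good S2 X}))"
    unfolding G_def using finOm assms by (intro card_mono finite_UnI finite_UN_I) auto
  also have "\<dots> \<le> G S + card (\<Union>j\<in>S - S2. {X \<in> PiE V Dm. viol j X \<and> good S2 X})"
    unfolding G_def by (rule card_Un_le)
  also have "card (\<Union>j\<in>S - S2. {X \<in> PiE V Dm. viol j X \<and> good S2 X}) \<le> (\<Sum>j\<in>S - S2. bad j S2)"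
    unfolding bad_def by (rule card_UN_le) (use assms in auto)
  finally have "G S2 \<le> G S + (\<Sum>j\<in>S - S2. bad j S2)" by simp
  then show ?thesis by (metis of_nat_add of_nat_le_iff of_nat_sum)
qed

lemma G_anti: "S2 \<subseteq> S \<Longrightarrow> G S \<le> G S2"
  unfolding G_def using finOm by (intro card_mono) (auto simp: good_def)

lemma bad_anti: "S2 \<subseteq> S \<Longrightarrow> bad c S \<le> bad c S2"
  unfolding bad_def using finOm by (intro card_mono) (auto simp: good_def)

lemma G_empty_pos: "G {} > 0"
proof -
  have "PiE V Dm \<noteq> {}" using neD by (simp add: PiE_eq_empty_iff)
  then show ?thesis unfolding G_def good_def using finOm by (simp add: card_gt_0_iff)
qed

lemma lll:
  fixes p :: real and Dg :: nat
  assumes deg: "\<And>c. c \<in> C \<Longrightarrow> card {c' \<in> C. c' \<noteq> c \<and> vbl c \<inter> vbl c' \<noteq> {}} \<le> Dg"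
    and pK: "\<And>c. c \<in> C \<Longrightarrow> 1 \<le> p * real (card (PiE (vbl c) Dm))"
    and p4: "4 * p * Dg \<le> 1" and Dg1: "Dg \<ge> 1" and p0: "p \<ge> 0"
  shows "S \<subseteq> C \<Longrightarrow> real (G S) > 0 \<and> (\<forall>c\<in>C - S. real (bad c S) \<le> 2 * p * real (G S))"
proof (induction "card S" arbitrary: S rule: less_induct)
  case less
  have p14: "4 * p \<le> 1"
  proof -
    have "4 * p * 1 \<le> 4 * p * real Dg" using Dg1 p0 by (intro mult_left_mono) auto
    then show ?thesis using p4 by simp
  qed
  have finS: "finite S" using less.prems finC finite_subset by blast
  have bad_step: "real (bad c S) \<le> 2 * p * real (G S)" if c: "c \<in> C - S" for c
  proof -
    define S1 where "S1 = {j \<in> S. vbl j \<inter> vbl c \<noteq> {}}"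
    define S2 where "S2 = S - S1"
    have S2S: "S2 \<subseteq> S" by (auto simp: S2_def)
    have "real (bad c S2) * real (card (PiE (vbl c) Dm)) \<le> real (G S2)"
    proof -
      have "bad c S2 * card (PiE (vbl c) Dm) \<le> G S2"
        using c less.prems by (intro indep) (auto simp: S2_def S1_def)
      then show ?thesis by (metis of_nat_le_iff of_nat_mult)
    qed
    then have b2: "real (bad c S2) \<le> p * real (G S2)"
    proof -
      have "real (bad c S2) = real (bad c S2) * 1" by simp
      also have "\<dots> \<le> real (bad c S2) * (p * real (card (PiE (vbl c) Dm)))"
        using pK[of c] c by (intro mult_left_mono) auto
      also have "\<dots> = p * (real (bad c S2) * real (card (PiE (vbl c) Dm)))" by simp
      also have "\<dots> \<le> p * real (G S2)"
        using \<open>real (bad c S2) * real (card (PiE (vbl c) Dm)) \<le> real (G S2)\<close> p0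
        by (intro mult_left_mono) auto
      finally show ?thesis .
    qed
    have b1: "real (bad c S) \<le> real (bad c S2)" using bad_anti[OF S2S] by simp
    show ?thesis
    proof (cases "S1 = {}")
      case True
      then have "S2 = S" by (simp add: S2_def)
      moreover have "0 \<le> p * real (G S)" using p0 by simp
      ultimately show ?thesis using b1 b2 by simp
    next
      case False
      have "card S2 < card S"
        using False finS by (auto simp: S2_def S1_def intro!: psubset_card_mono)
      from less.hyps[OF this] S2S less.prems
      have IH: "real (G S2) > 0" "\<And>j. j \<in> C - S2 \<Longrightarrow> real (bad j S2) \<le> 2 * p * real (G S2)"
        by auto
      have S1S2: "S - S2 = S1" using S2_def S1_def by auto
      have "real (G S2) \<le> real (G S) + (\<Sum>j\<in>S1. real (bad j S2))"
        using G_split[OF S2S finS] S1S2 by simp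
      also have "(\<Sum>j\<in>S1. real (bad j S2)) \<le> (\<Sum>j\<in>S1. 2 * p * real (G S2))"
        using IH(2) less.prems by (intro sum_mono) (auto simp: S1_def S2_def)
      also have "\<dots> = real (card S1) * (2 * p * real (G S2))" by simp
      also have "card S1 \<le> Dg"
      proof -
        have "S1 \<subseteq> {c' \<in> C. c' \<noteq> c \<and> vbl c \<inter> vbl c' \<noteq> {}}"
          using c less.prems by (auto simp: S1_def)
        then have "card S1 \<le> card {c' \<in> C. c' \<noteq> c \<and> vbl c \<inter> vbl c' \<noteq> {}}"
          using finC by (intro card_mono) auto
        with deg[of c] c show ?thesis by simp
      qed
      then have "real (card S1) * (2 * p * real (G S2)) \<le> real Dg * (2 * p * real (G S2))"
        using p0 by (intro mult_right_mono) auto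
      finally have "real (G S2) \<le> real (G S) + real Dg * (2 * p * real (G S2))"
        by simp
      moreover have "real Dg * (2 * p * real (G S2)) \<le> real (G S2) / 2"
      proof -
        have "real Dg * (2 * p * real (G S2)) = (4 * p * real Dg) * real (G S2) / 2"
          by (simp add: algebra_simps)
        also have "\<dots> \<le> 1 * real (G S2) / 2"
          using p4 by (intro divide_right_mono mult_right_mono) auto
        finally show ?thesis by simp
      qed
      ultimately have "real (G S2) \<le> 2 * real (G S)" by simp
      then have "p * real (G S2) \<le> p * (2 * real (G S))"
        using p0 by (intro mult_left_mono) auto
      with b1 b2 show ?thesis by simp
    qed
  qed
  have Gpos: "real (G S) > 0"
  proof (cases "S = {}")
    case True
    then show ?thesis using G_empty_pos by simp
  next
    case False
    then obtain c where c: "c \<in> S" by blast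
    have "card (S - {c}) < card S" using c finS by (meson card_Diff1_less)
    from less.hyps[OF this] less.prems c
    have IH: "real (G (S - {c})) > 0" "real (bad c (S - {c})) \<le> 2 * p * real (G (S - {c}))"
      by auto
    have "S - (S - {c}) = {c}" using c by auto
    then have "real (G (S - {c})) \<le> real (G S) + real (bad c (S - {c}))"
      using G_split[of "S - {c}" S] finS by auto
    moreover have "2 * p * real (G (S - {c})) \<le> (1/2) * real (G (S - {c}))"
      using p14 by (intro mult_right_mono) auto
    ultimately show ?thesis using IH by linarith
  qed
  show ?case using Gpos bad_step by blast
qed

end

context lllc begin

lemma F_mono:
  assumes u: "u \<in> V" and S0: "\<And>j. j \<in> S0 \<Longrightarrow> u \<notin> vbl j"
    and x: "x \<in> Dm u" and x': "x' \<in> Dm u"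
  shows "card {X \<in> PiE V Dm. X u = x \<and> good S0 X} \<le> card {X \<in> PiE V Dm. X u = x' \<and> good S0 X}"
proof -
  let ?f = "\<lambda>X. X(u := x')"
  have "inj_on ?f {X \<in> PiE V Dm. X u = x \<and> good S0 X}"
  proof
    fix X Y assume X: "X \<in> {X \<in> PiE V Dm. X u = x \<and> good S0 X}" and Y: "Y \<in> {X \<in> PiE V Dm. X u = x \<and> good S0 X}"
      and e: "X(u := x') = Y(u := x')"
    show "X = Y"
    proof
      fix v show "X v = Y v" using X Y fun_cong[OF e, of v] by (cases "v = u") auto
    qed
  qed
  moreover have "?f ` {X \<in> PiE V Dm. X u = x \<and> good S0 X} \<subseteq> {X \<in> PiE V Dm. X u = x' \<and> good S0 X}"
  proof
    fix Z assume "Z \<in> ?f ` {X \<in> PiE V Dm. X u = x \<and> good S0 X}"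
    then obtain X where X: "X \<in> PiE V Dm" "X u = x" "good S0 X" and Z: "Z = X(u := x')" by auto
    have "Z \<in> PiE V Dm" using X(1) x' u unfolding Z by (auto simp: PiE_def Pi_def extensional_def)
    moreover have "good S0 Z"
      using X(3) unfolding good_def
    proof (intro ballI)
      fix j assume "\<forall>j\<in>S0. \<not> viol j X" "j \<in> S0"
      moreover have "viol j Z = viol j X" using S0[OF \<open>j \<in> S0\<close>] by (intro viol_cong) (auto simp: Z)
      ultimately show "\<not> viol j Z" by simp
    qed
    ultimately show "Z \<in> {X \<in> PiE V Dm. X u = x' \<and> good S0 X}" by (simp add: Z)
  qed
  ultimately show ?thesis using finOm
  proof -
    assume i: "inj_on ?f {X \<in> PiE V Dm. X u = x \<and> good S0 X}"
      and s: "?f ` {X \<in> PiE V Dm. X u = x \<and> good S0 X} \<subseteq> {X \<in> PiE V Dm. X u = x' \<and> good S0 X}"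
    have "card {X \<in> PiE V Dm. X u = x \<and> good S0 X} = card (?f ` {X \<in> PiE V Dm. X u = x \<and> good S0 X})"
      using i by (simp add: card_image)
    also have "\<dots> \<le> card {X \<in> PiE V Dm. X u = x' \<and> good S0 X}"
      using s finOm by (intro card_mono) auto
    finally show ?thesis .
  qed
qed

lemma F_sum:
  assumes u: "u \<in> V"
  shows "G S0 = (\<Sum>x\<in>Dm u. card {X \<in> PiE V Dm. X u = x \<and> good S0 X})"
proof -
  have "{X \<in> PiE V Dm. good S0 X} = (\<Union>x\<in>Dm u. {X \<in> PiE V Dm. X u = x \<and> good S0 X})"
    using u by (auto simp: PiE_def Pi_def)
  then have "G S0 = card (\<Union>x\<in>Dm u. {X \<in> PiE V Dm. X u = x \<and> good S0 X})" by (simp add: G_def)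
  also have "\<dots> = (\<Sum>x\<in>Dm u. card {X \<in> PiE V Dm. X u = x \<and> good S0 X})"
    using finD[OF u] finOm by (intro card_UN_disjoint) auto
  finally show ?thesis .
qed

lemma F_bound:
  assumes u: "u \<in> V" and S0: "\<And>j. j \<in> S0 \<Longrightarrow> u \<notin> vbl j" and x: "x \<in> Dm u"
  shows "card {X \<in> PiE V Dm. X u = x \<and> good S0 X} * card (Dm u) \<le> G S0"
proof -
  have "card {X \<in> PiE V Dm. X u = x \<and> good S0 X} * card (Dm u)
       = (\<Sum>x'\<in>Dm u. card {X \<in> PiE V Dm. X u = x \<and> good S0 X})" by simp
  also have "\<dots> \<le> (\<Sum>x'\<in>Dm u. card {X \<in> PiE V Dm. X u = x' \<and> good S0 X})"
    by (intro sum_mono F_mono[OF u S0 x]) auto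
  also have "\<dots> = G S0" using F_sum[OF u] by simp
  finally show ?thesis .
qed

lemma final_bound:
  fixes p :: real and Dg :: nat
  assumes deg: "\<And>c. c \<in> C \<Longrightarrow> card {c' \<in> C. c' \<noteq> c \<and> vbl c \<inter> vbl c' \<noteq> {}} \<le> Dg"
    and pK: "\<And>c. c \<in> C \<Longrightarrow> 1 \<le> p * real (card (PiE (vbl c) Dm))"
    and p4: "4 * p * Dg \<le> 1" and Dg1: "Dg \<ge> 1" and p0: "p \<ge> 0"
    and u: "u \<in> V" and Y: "Y \<subseteq> Dm u"
  shows "real (card {X \<in> PiE V Dm. good C X \<and> X u \<in> Y}) * real (card (Dm u)) * (1 - 2 * p * (Dg + 1))
         \<le> real (card Y) * real (G C)"
proof -
  define U where "U = {c \<in> C. u \<in> vbl c}"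
  define S0 where "S0 = C - U"
  have S0u: "\<And>j. j \<in> S0 \<Longrightarrow> u \<notin> vbl j" by (auto simp: S0_def U_def)
  have finY: "finite Y" using Y finD[OF u] finite_subset by blast
  have cardU: "card U \<le> Dg + 1"
  proof (cases "U = {}")
    case True then show ?thesis by simp
  next
    case False
    then obtain c0 where c0: "c0 \<in> U" by blast
    have "U - {c0} \<subseteq> {c' \<in> C. c' \<noteq> c0 \<and> vbl c0 \<inter> vbl c' \<noteq> {}}"
      using c0 by (auto simp: U_def)
    then have "card (U - {c0}) \<le> card {c' \<in> C. c' \<noteq> c0 \<and> vbl c0 \<inter> vbl c' \<noteq> {}}"
      using finC by (intro card_mono) auto
    also have "\<dots> \<le> Dg" using deg[of c0] c0 by (simp add: U_def)
    finally have 1: "card (U - {c0}) \<le> Dg" .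
    have "finite U" using finC by (simp add: U_def)
    then have "card U = Suc (card (U - {c0}))" using card.remove[of U c0] c0 by simp
    with 1 show ?thesis by simp
  qed
  have S0C: "S0 \<subseteq> C" by (auto simp: S0_def)
  from lll[OF deg pK p4 Dg1 p0 S0C]
  have L: "real (G S0) > 0" "\<And>c. c \<in> C - S0 \<Longrightarrow> real (bad c S0) \<le> 2 * p * real (G S0)"
    by auto
  have CS0: "C - S0 = U" by (auto simp: S0_def U_def)
  have "real (G S0) \<le> real (G C) + (\<Sum>j\<in>U. real (bad j S0))"
    using G_split[OF S0C finC] CS0 by simp
  also have "(\<Sum>j\<in>U. real (bad j S0)) \<le> (\<Sum>j\<in>U. 2 * p * real (G S0))"
    using L(2) CS0 by (intro sum_mono) auto
  also have "\<dots> = real (card U) * (2 * p * real (G S0))" by simp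
  also have "\<dots> \<le> real (Dg + 1) * (2 * p * real (G S0))"
    using cardU p0 by (intro mult_right_mono) auto
  finally have GC: "real (G S0) * (1 - 2 * p * (Dg + 1)) \<le> real (G C)"
    by (simp add: algebra_simps)
  let ?N = "{X \<in> PiE V Dm. good C X \<and> X u \<in> Y}"
  have "?N \<subseteq> (\<Union>x\<in>Y. {X \<in> PiE V Dm. X u = x \<and> good S0 X})"
    by (auto simp: good_def S0_def)
  then have "card ?N \<le> card (\<Union>x\<in>Y. {X \<in> PiE V Dm. X u = x \<and> good S0 X})"
    using finY finOm by (intro card_mono) auto
  also have "\<dots> \<le> (\<Sum>x\<in>Y. card {X \<in> PiE V Dm. X u = x \<and> good S0 X})"
    using finY by (rule card_UN_le)
  finally have "card ?N * card (Dm u) \<le> (\<Sum>x\<in>Y. card {X \<in> PiE V Dm. X u = x \<and> good S0 X}) * card (Dm u)"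
    by simp
  also have "\<dots> = (\<Sum>x\<in>Y. card {X \<in> PiE V Dm. X u = x \<and> good S0 X} * card (Dm u))"
    by (simp add: sum_distrib_right)
  also have "\<dots> \<le> (\<Sum>x\<in>Y. G S0)"
    using Y by (intro sum_mono F_bound[OF u S0u]) auto
  also have "\<dots> = card Y * G S0" by simp
  finally have NB0: "card ?N * card (Dm u) \<le> card Y * G S0" .
  have NB: "real (card ?N) * real (card (Dm u)) \<le> real (card Y) * real (G S0)"
    using NB0 unfolding of_nat_mult[symmetric] of_nat_le_iff .
  show ?thesis
  proof (cases "1 - 2 * p * (Dg + 1) \<le> 0")
    case True
    then have "real (card ?N) * real (card (Dm u)) * (1 - 2 * p * (Dg + 1)) \<le> 0"
      by (simp add: mult_nonneg_nonpos)
    also have "0 \<le> real (card Y) * real (G C)" by simp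
    finally show ?thesis .
  next
    case False
    then have "real (card ?N) * real (card (Dm u)) * (1 - 2 * p * (Dg + 1))
        \<le> real (card Y) * real (G S0) * (1 - 2 * p * (Dg + 1))"
      using NB by (intro mult_right_mono) auto
    also have "\<dots> = real (card Y) * (real (G S0) * (1 - 2 * p * (Dg + 1)))" by simp
    also have "\<dots> \<le> real (card Y) * real (G C)"
      using GC by (intro mult_left_mono) auto
    finally show ?thesis .
  qed
qed

end

lemma e_ge: "exp (1::real) \<ge> 9/4"
proof -
  have "1 + 1/2 \<le> exp (1/2::real)" by (rule exp_ge_add_one_self)
  then have "(3/2)^2 \<le> (exp (1/2::real))^2" by (intro power_mono) auto
  also have "\<dots> = exp 1" by (simp add: power2_eq_square flip: exp_add)
  finally show ?thesis by (simp add: power2_eq_square)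
qed

lemma delta_bound:
  fixes D :: nat
  assumes D: "D \<ge> 1"
  defines "p \<equiv> 1 / (40 * exp 1 * real D ^ 2)"
  shows "1 - 2 * p * (real D + 1) > 0" "1 / (1 - 2 * p * (real D + 1)) \<le> exp (1 / (20 * real D))"
proof -
  define t where "t = 1 / real D"
  have Dr: "real D \<ge> 1" using D by simp
  have t0: "t > 0" and t1: "t \<le> 1" using Dr by (auto simp: t_def)
  have e: "exp (1::real) \<ge> 9/4" by (rule e_ge)
  have K: "40 * exp 1 * real D ^ 2 \<ge> 90 * real D ^ 2"
    using e by (intro mult_right_mono) auto
  have "90 * real D * (real D + 1) \<le> 90 * real D ^ 2 + 90 * real D ^ 2"
    using Dr by (simp add: power2_eq_square algebra_simps)
  also have "\<dots> \<le> 2 * (40 * exp 1 * real D ^ 2)" using K by simp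
  finally have A: "90 * real D * (real D + 1) \<le> 2 * (40 * exp 1 * real D ^ 2)" .
  have Kpos: "40 * exp 1 * real D ^ 2 > 0" using Dr by simp
  have B: "2 * p * (real D + 1) \<le> (2/45) * t"
  proof -
    have "2 * p * (real D + 1) = 2 * (real D + 1) / (40 * exp 1 * real D ^ 2)"
      using Kpos by (simp add: p_def divide_simps)
    also have "\<dots> \<le> (2/45) * t"
      using A Kpos Dr unfolding t_def by (simp add: divide_simps algebra_simps)
    finally show ?thesis .
  qed
  show pos: "1 - 2 * p * (real D + 1) > 0" using B t1 by linarith
  have "(1 - (2/45) * t) * (1 + t / 20) \<ge> 1"
  proof -
    have "(2/45) * t * t / 20 \<le> (2/45) * t / 20" using t0 t1
      by (simp add: mult_left_le)
    then show ?thesis by (simp add: algebra_simps) (use t0 in linarith)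
  qed
  then have C: "(1 - 2 * p * (real D + 1)) * (1 + t / 20) \<ge> 1"
  proof -
    have "(1 - (2/45) * t) * (1 + t / 20) \<le> (1 - 2 * p * (real D + 1)) * (1 + t / 20)"
      using B t0 by (intro mult_right_mono) auto
    with \<open>(1 - (2/45) * t) * (1 + t / 20) \<ge> 1\<close> show ?thesis by linarith
  qed
  have tt: "t / 20 = 1 / (20 * real D)" by (simp add: t_def)
  have "1 + t / 20 \<le> exp (t / 20)" by (rule exp_ge_add_one_self)
  then have X: "1 + t / 20 \<le> exp (1 / (20 * real D))" by (simp only: tt)
  have "1 / (1 - 2 * p * (real D + 1)) \<le> 1 + t / 20"
    using C pos by (simp add: divide_simps mult.commute)
  with X show "1 / (1 - 2 * p * (real D + 1)) \<le> exp (1 / (20 * real D))" by linarith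
qed

lemma arith_final:
  fixes N q dl Yc Gd ce ex :: real
  assumes "N * q * dl \<le> Yc * Gd" "Gd > 0" "q > 0" "dl > 0" "Yc \<le> ce" "1 / dl \<le> ex" "Yc \<ge> 0"
  shows "N / Gd \<le> ce / q * ex"
proof -
  have "N / Gd \<le> Yc / (q * dl)" using assms by (simp add: divide_simps mult.commute mult.left_commute)
  also have "\<dots> = (Yc / q) * (1 / dl)" by simp
  also have "\<dots> \<le> (ce / q) * ex"
    using assms by (intro mult_mono divide_right_mono) auto
  finally show ?thesis .
qed


lemma cond_pmf_of_set:
  assumes fin: "finite S" and ne: "S \<inter> A \<noteq> {}"
  shows "cond_pmf (pmf_of_set S) A = pmf_of_set (S \<inter> A)"
proof -
  have Sne: "S \<noteq> {}" using ne by auto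
  have ne': "set_pmf (pmf_of_set S) \<inter> A \<noteq> {}" using fin Sne ne by simp
  have cS: "card S > 0" using fin Sne by (simp add: card_gt_0_iff)
  have cSA: "card (S \<inter> A) > 0" using fin ne by (simp add: card_gt_0_iff)
  show ?thesis
  proof (rule pmf_eqI)
    fix x
    show "pmf (cond_pmf (pmf_of_set S) A) x = pmf (pmf_of_set (S \<inter> A)) x"
      using pmf_cond[OF ne', of x] fin Sne ne cS cSA
      by (auto simp: measure_pmf_of_set indicator_def Int_commute)
  qed
qed

theorem lemma7p7:
  fixes V :: "'v set" and Q :: "'v \<Rightarrow> 'a set" and C :: "'c set"
    and vbl :: "'c \<Rightarrow> 'v set" and sat :: "'c \<Rightarrow> ('v \<Rightarrow> 'a) \<Rightarrow> bool"
    and \<Sigma> :: "'v \<Rightarrow> 'b set" and h :: "'v \<Rightarrow> 'a \<Rightarrow> 'b"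
    and \<alpha> \<beta> :: real and D :: nat
    and u :: 'v and \<tau> :: "'v \<Rightarrow> 'b" and y :: 'b
  assumes csp: "csp_formula V Q C vbl"
    and atomic: "\<forall>c\<in>C. atomic_constraint Q (vbl c) (sat c)"
    and satisfiable: "sat_assignments V Q C vbl sat \<noteq> {}"
    and proj: "projection_scheme V Q \<Sigma> h"
    and ent: "entropy_criterion V Q C vbl \<Sigma> h \<alpha> \<beta>"
    and ab: "0 < \<beta>" "\<beta> < \<alpha>" "\<alpha> < 1"
    and D_def: "D = max_dep_degree C vbl"
    and D_pos: "D \<ge> 1"
    and big: "\<forall>c\<in>C. (\<Sum>v\<in>vbl c. log 2 (real (card (Q v))))
                     \<ge> (1 / \<beta>) * log 2 (40 * exp 1 * real D ^ 2)"
    and u: "u \<in> V"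
    and tau: "\<forall>v\<in>V - {u}. \<tau> v \<in> \<Sigma> v"
    and y: "y \<in> \<Sigma> u"
    and feasible: "cond_event V u \<tau> \<inter> set_pmf (proj_nu V h (csp_mu V Q C vbl sat)) \<noteq> {}"
  shows "pmf (cond_marginal V (proj_nu V h (csp_mu V Q C vbl sat)) u \<tau>) y
           \<le> real_of_int \<lceil>real (card (Q u)) / real (card (\<Sigma> u))\<rceil> / real (card (Q u))
             * exp (1 / (20 * real D))"
proof -
  from csp have finV: "finite V" and finC: "finite C"
    and finQ: "\<And>v. v \<in> V \<Longrightarrow> finite (Q v)" and cardQ: "\<And>v. v \<in> V \<Longrightarrow> card (Q v) \<ge> 2"
    and vblV: "\<And>c. c \<in> C \<Longrightarrow> vbl c \<subseteq> V"
    unfolding csp_formula_def by auto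
  define SAT where "SAT = sat_assignments V Q C vbl sat"
  define g where "g = (\<lambda>X::'v\<Rightarrow>'a. restrict (\<lambda>v. h v (X v)) V)"
  define E where "E = cond_event V u \<tau>"
  define \<sigma> where "\<sigma> = (\<lambda>c. THE s. s \<in> PiE (vbl c) Q \<and> \<not> sat c s)"
  have \<sigma>: "sat c s \<longleftrightarrow> s \<noteq> \<sigma> c" if c: "c \<in> C" and s: "s \<in> PiE (vbl c) Q" for c s
  proof -
    from atomic c have "\<exists>!s. s \<in> PiE (vbl c) Q \<and> \<not> sat c s"
      unfolding atomic_constraint_def by blast
    then obtain s0 where s0': "s0 \<in> PiE (vbl c) Q \<and> \<not> sat c s0"
      and uniq': "\<forall>s'. s' \<in> PiE (vbl c) Q \<and> \<not> sat c s' \<longrightarrow> s' = s0" by (rule ex1E)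
    from s0' have s0: "s0 \<in> PiE (vbl c) Q" "\<not> sat c s0" by auto
    from uniq' have uniq: "\<And>s'. s' \<in> PiE (vbl c) Q \<Longrightarrow> \<not> sat c s' \<Longrightarrow> s' = s0" by blast
    have "\<sigma> c = s0" unfolding \<sigma>_def
    proof (rule the_equality)
      show "s0 \<in> PiE (vbl c) Q \<and> \<not> sat c s0" using s0' .
      fix s' assume "s' \<in> PiE (vbl c) Q \<and> \<not> sat c s'"
      then show "s' = s0" using uniq' by blast
    qed
    moreover have "sat c s \<longleftrightarrow> s \<noteq> s0"
    proof
      assume "sat c s" then show "s \<noteq> s0" using s0(2) by blast
    next
      assume "s \<noteq> s0" then show "sat c s" using uniq[OF s] by blast
    qed
    ultimately show ?thesis by simp
  qed
  define Dm where "Dm = (\<lambda>v. if v = u then Q u else {x \<in> Q v. h v x = \<tau> v})"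
  have finSAT: "finite SAT"
  proof -
    have "SAT \<subseteq> PiE V Q" by (auto simp: SAT_def sat_assignments_def)
    moreover have "finite (PiE V Q)" using finV finQ by (intro finite_PiE) auto
    ultimately show ?thesis by (rule finite_subset)
  qed
  have SATne: "SAT \<noteq> {}" using satisfiable by (simp add: SAT_def)
  have setnu: "set_pmf (proj_nu V h (csp_mu V Q C vbl sat)) = g ` SAT"
    using finSAT SATne by (simp add: proj_nu_def csp_mu_def SAT_def g_def)
  from feasible obtain X0 where X0: "X0 \<in> SAT" "g X0 \<in> E"
    unfolding setnu E_def by auto
  have X0Q: "X0 \<in> PiE V Q" using X0(1) by (simp add: SAT_def sat_assignments_def)
  have E_iff: "g X \<in> E \<longleftrightarrow> (\<forall>v\<in>V - {u}. h v (X v) = \<tau> v)" for X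
    by (simp add: E_def cond_event_def g_def)
  have neD: "Dm v \<noteq> {}" if v: "v \<in> V" for v
  proof (cases "v = u")
    case True
    then show ?thesis using cardQ[OF v] by (auto simp: Dm_def)
  next
    case False
    have "X0 v \<in> Dm v" using X0Q X0(2) v False E_iff by (auto simp: Dm_def PiE_def Pi_def)
    then show ?thesis by auto
  qed
  have finD: "finite (Dm v)" if v: "v \<in> V" for v
    using finQ[OF v] by (auto simp: Dm_def)
  interpret L: lllc V Dm C vbl \<sigma>
    using finV finD neD finC vblV by unfold_locales auto
  have DmQ: "Dm v \<subseteq> Q v" for v by (auto simp: Dm_def)
  have Good: "SAT \<inter> g -` E = {X \<in> PiE V Dm. L.good C X}"
  proof (intro equalityI subsetI)
    fix X assume X: "X \<in> SAT \<inter> g -` E"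
    then have XQ: "X \<in> PiE V Q" and sX: "\<forall>c\<in>C. sat c (restrict X (vbl c))"
      by (auto simp: SAT_def sat_assignments_def)
    have "X \<in> PiE V Dm" using XQ X E_iff by (auto simp: Dm_def PiE_def Pi_def)
    moreover have "L.good C X" unfolding L.good_def L.viol_def
    proof
      fix c assume c: "c \<in> C"
      have "restrict X (vbl c) \<in> PiE (vbl c) Q" using XQ vblV[OF c] by (auto simp: PiE_def Pi_def)
      then show "restrict X (vbl c) \<noteq> \<sigma> c" using \<sigma>[OF c] sX c by blast
    qed
    ultimately show "X \<in> {X \<in> PiE V Dm. L.good C X}" by simp
  next
    fix X assume X: "X \<in> {X \<in> PiE V Dm. L.good C X}"
    then have XD: "X \<in> PiE V Dm" and gd: "L.good C X" by auto
    have XQ: "X \<in> PiE V Q" using XD DmQ by (auto simp: PiE_def Pi_def)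
    have "\<forall>c\<in>C. sat c (restrict X (vbl c))"
    proof
      fix c assume c: "c \<in> C"
      have "restrict X (vbl c) \<in> PiE (vbl c) Q" using XQ vblV[OF c] by (auto simp: PiE_def Pi_def)
      then show "sat c (restrict X (vbl c))" using \<sigma>[OF c] gd c
        unfolding L.good_def L.viol_def by blast
    qed
    then have "X \<in> SAT" using XQ by (simp add: SAT_def sat_assignments_def)
    moreover have "g X \<in> E" unfolding E_iff
    proof
      fix v assume v: "v \<in> V - {u}"
      then have "X v \<in> Dm v" using XD by (auto simp: PiE_def Pi_def)
      then show "h v (X v) = \<tau> v" using v by (simp add: Dm_def)
    qed
    ultimately show "X \<in> SAT \<inter> g -` E" by simp
  qed
  define Y where "Y = {x \<in> Q u. h u x = y}"
  have Num: "{X \<in> SAT \<inter> g -` E. g X u = y} = {X \<in> PiE V Dm. L.good C X \<and> X u \<in> Y}"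
  proof -
    have "g X u = h u (X u)" for X using u by (simp add: g_def)
    then show ?thesis using Good u by (auto simp: Y_def Dm_def PiE_def Pi_def)
  qed
  have ne1: "SAT \<inter> g -` E \<noteq> {}" using X0 by auto
  have cm: "cond_marginal V (proj_nu V h (csp_mu V Q C vbl sat)) u \<tau>
        = map_pmf (\<lambda>X. g X u) (pmf_of_set (SAT \<inter> g -` E))"
  proof -
    have pn: "proj_nu V h (csp_mu V Q C vbl sat) = map_pmf g (pmf_of_set SAT)"
      by (simp add: proj_nu_def csp_mu_def SAT_def g_def)
    have "set_pmf (pmf_of_set SAT) \<inter> g -` E \<noteq> {}" using finSAT SATne ne1 by simp
    then have "cond_pmf (map_pmf g (pmf_of_set SAT)) E = map_pmf g (cond_pmf (pmf_of_set SAT) (g -` E))"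
      by (rule cond_map_pmf)
    also have "\<dots> = map_pmf g (pmf_of_set (SAT \<inter> g -` E))"
      using cond_pmf_of_set[OF finSAT ne1] by simp
    finally show ?thesis
      unfolding cond_marginal_def pn E_def[symmetric] by (simp add: pmf.map_comp o_def)
  qed
  have finGood: "finite (SAT \<inter> g -` E)" using finSAT by simp
  have pmfval: "pmf (cond_marginal V (proj_nu V h (csp_mu V Q C vbl sat)) u \<tau>) y
     = real (card {X \<in> PiE V Dm. L.good C X \<and> X u \<in> Y}) / real (L.G C)"
  proof -
    have "pmf (cond_marginal V (proj_nu V h (csp_mu V Q C vbl sat)) u \<tau>) y
        = measure (pmf_of_set (SAT \<inter> g -` E)) ((\<lambda>X. g X u) -` {y})"
      unfolding cm pmf_map ..
    also have "\<dots> = real (card ((SAT \<inter> g -` E) \<inter> (\<lambda>X. g X u) -` {y})) / real (card (SAT \<inter> g -` E))"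
      using finGood ne1 by (simp add: measure_pmf_of_set)
    also have "(SAT \<inter> g -` E) \<inter> (\<lambda>X. g X u) -` {y} = {X \<in> SAT \<inter> g -` E. g X u = y}" by auto
    finally show ?thesis unfolding Num unfolding L.G_def Good .
  qed
  define p where "p = 1 / (40 * exp 1 * real D ^ 2)"
  have Dr: "real D \<ge> 1" using D_pos by simp
  have Kpos: "40 * exp 1 * real D ^ 2 > 0" using Dr by simp
  have p0: "p \<ge> 0" using Kpos by (simp add: p_def)
  have p4: "4 * p * real D \<le> 1"
  proof -
    have "4 * real D \<le> 40 * real D ^ 2" using Dr by (simp add: power2_eq_square)
    also have "\<dots> \<le> 40 * exp 1 * real D ^ 2"
      using exp_ge_add_one_self[of "1::real"] by (intro mult_right_mono) auto
    finally show ?thesis using Kpos by (simp add: p_def divide_simps)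
  qed
  have deg: "card {c' \<in> C. c' \<noteq> c \<and> vbl c \<inter> vbl c' \<noteq> {}} \<le> D" if c: "c \<in> C" for c
  proof -
    have "C \<noteq> {}" using c by auto
    then have "D = Max (dep_degree C vbl ` C)" by (simp add: D_def max_dep_degree_def)
    moreover have "dep_degree C vbl c \<le> Max (dep_degree C vbl ` C)"
      using finC c by (intro Max_ge) auto
    ultimately show ?thesis by (simp add: dep_degree_def)
  qed
  have ent1: "\<And>v z. v \<in> V \<Longrightarrow> z \<in> \<Sigma> v \<Longrightarrow>
      \<lfloor>real (card (Q v)) / real (card (\<Sigma> v))\<rfloor> \<le> int (card {x \<in> Q v. h v x = z}) \<and>
      int (card {x \<in> Q v. h v x = z}) \<le> \<lceil>real (card (Q v)) / real (card (\<Sigma> v))\<rceil>"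
    using ent unfolding entropy_criterion_def by blast
  have ent2: "\<And>c. c \<in> C \<Longrightarrow> (\<Sum>v\<in>vbl c. log 2 (real_of_int \<lfloor>real (card (Q v)) / real (card (\<Sigma> v))\<rfloor>))
          \<ge> \<beta> * (\<Sum>v\<in>vbl c. log 2 (real (card (Q v))))"
    using ent unfolding entropy_criterion_def by blast
  have floor_le: "\<lfloor>real (card (Q v)) / real (card (\<Sigma> v))\<rfloor> \<le> int (card (Dm v))" if v: "v \<in> V" for v
  proof (cases "v = u")
    case True
    have "card {x \<in> Q u. h u x = y} \<le> card (Q u)" using finQ[OF u] by (intro card_mono) auto
    then show ?thesis using ent1[OF u y] True by (simp add: Dm_def)
  next
    case False
    then show ?thesis using ent1[OF v] tau v by (simp add: Dm_def)
  qed
  have logle: "log 2 (real_of_int \<lfloor>real (card (Q v)) / real (card (\<Sigma> v))\<rfloor>) \<le> log 2 (real (card (Dm v)))"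
    if v: "v \<in> V" for v
  proof -
    have c1: "card (Dm v) \<ge> 1" using neD[OF v] finD[OF v]
      by (simp add: Suc_le_eq card_gt_0_iff)
    have f0: "\<lfloor>real (card (Q v)) / real (card (\<Sigma> v))\<rfloor> \<ge> 0" by simp
    show ?thesis
    proof (cases "\<lfloor>real (card (Q v)) / real (card (\<Sigma> v))\<rfloor> = 0")
      case True
      have l0: "log 2 (0::real) = 0" by (simp add: log_def)
      have "0 \<le> log 2 (real (card (Dm v)))" using c1 by simp
      then show ?thesis using True l0 by simp
    next
      case False
      with f0 have "\<lfloor>real (card (Q v)) / real (card (\<Sigma> v))\<rfloor> > 0" by linarith
      then have "real_of_int \<lfloor>real (card (Q v)) / real (card (\<Sigma> v))\<rfloor> > 0"
        by (simp only: of_int_0_less_iff)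
      moreover have "real_of_int \<lfloor>real (card (Q v)) / real (card (\<Sigma> v))\<rfloor> \<le> real (card (Dm v))"
        using floor_le[OF v] by linarith
      moreover have "real (card (Dm v)) > 0" using c1 by simp
      ultimately show ?thesis by (intro iffD2[OF log_le_cancel_iff]) auto
    qed
  qed
  have pK: "1 \<le> p * real (card (PiE (vbl c) Dm))" if c: "c \<in> C" for c
  proof -
    let ?K = "40 * exp 1 * real D ^ 2"
    have finc: "finite (vbl c)" using vblV[OF c] finV finite_subset by blast
    have "log 2 ?K \<le> \<beta> * (\<Sum>v\<in>vbl c. log 2 (real (card (Q v))))"
    proof -
      have "(1 / \<beta>) * log 2 ?K \<le> (\<Sum>v\<in>vbl c. log 2 (real (card (Q v))))" using big c by blast
      then have "\<beta> * ((1 / \<beta>) * log 2 ?K) \<le> \<beta> * (\<Sum>v\<in>vbl c. log 2 (real (card (Q v))))"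
        using ab(1) by (intro mult_left_mono) auto
      then show ?thesis using ab(1) by simp
    qed
    also have "\<dots> \<le> (\<Sum>v\<in>vbl c. log 2 (real_of_int \<lfloor>real (card (Q v)) / real (card (\<Sigma> v))\<rfloor>))"
      using ent2[OF c] .
    also have "\<dots> \<le> (\<Sum>v\<in>vbl c. log 2 (real (card (Dm v))))"
      using vblV[OF c] by (intro sum_mono logle) auto
    finally have LL: "log 2 ?K \<le> (\<Sum>v\<in>vbl c. log 2 (real (card (Dm v))))" .
    have cpos: "real (card (Dm v)) > 0" if "v \<in> vbl c" for v
      using neD finD vblV[OF c] that by (auto simp: card_gt_0_iff)
    have "?K = 2 powr (log 2 ?K)" using Kpos by simp
    also have "\<dots> \<le> 2 powr (\<Sum>v\<in>vbl c. log 2 (real (card (Dm v))))"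
      using LL by simp
    also have "\<dots> = (\<Prod>v\<in>vbl c. 2 powr (log 2 (real (card (Dm v)))))"
      by (simp add: powr_sum)
    also have "\<dots> = (\<Prod>v\<in>vbl c. real (card (Dm v)))"
      using cpos by (intro prod.cong) auto
    also have "\<dots> = real (card (PiE (vbl c) Dm))"
      using finc by (simp add: card_PiE)
    finally have "?K \<le> real (card (PiE (vbl c) Dm))" .
    then show ?thesis using Kpos by (simp add: p_def divide_simps)
  qed
  have Ysub: "Y \<subseteq> Dm u" by (auto simp: Y_def Dm_def)
  have FB: "real (card {X \<in> PiE V Dm. L.good C X \<and> X u \<in> Y}) * real (card (Dm u)) * (1 - 2 * p * (real D + 1))
         \<le> real (card Y) * real (L.G C)"
    using L.final_bound[OF deg pK p4 D_pos p0 u Ysub] by (simp add: add.commute)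
  have GCpos: "real (L.G C) > 0" using L.lll[OF deg pK p4 D_pos p0, of C] by simp
  have dl: "1 - 2 * p * (real D + 1) > 0" "1 / (1 - 2 * p * (real D + 1)) \<le> exp (1 / (20 * real D))"
    using delta_bound[OF D_pos] by (simp_all add: p_def)
  have Yc: "real (card Y) \<le> real_of_int \<lceil>real (card (Q u)) / real (card (\<Sigma> u))\<rceil>"
    using ent1[OF u y] by (simp add: Y_def)
  have qpos: "real (card (Dm u)) > 0" using cardQ[OF u] by (simp add: Dm_def)
  have fin: "real (card {X \<in> PiE V Dm. L.good C X \<and> X u \<in> Y}) / real (L.G C)
     \<le> real_of_int \<lceil>real (card (Q u)) / real (card (\<Sigma> u))\<rceil> / real (card (Dm u)) * exp (1 / (20 * real D))"
    by (rule arith_final[OF FB GCpos qpos dl(1) Yc dl(2)]) simp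
  have DQ: "Dm u = Q u" by (simp add: Dm_def)
  show ?thesis unfolding pmfval using fin unfolding DQ .
qed

end
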